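(* Consider a connected regular graph with a proper two-coloring having $N_{\mathrm{G}}=N_{\mathrm{R}}=N/2$ green and red vertices, under the colored Moran process with fitness values $a_{\mathrm{G}}=r+\sigma$, $a_{\mathrm{R}}=r-\sigma$, $b_{\mathrm{G}}=1+\sigma$, $b_{\mathrm{R}}=1-\sigma$, where $r>0$, $r\neq1$, and $0\le\sigma<\min(1,r)$. Then the mean fixation probability of a single randomly placed $A$ is $$\rho_A=\frac{r(r-1)}{(r^2-\sigma^2)\left(1-\left(\frac{1-\sigma^2}{r^2-\sigma^2}\right)^{N/2}\right)}.$$ Consequently, on $0\le\sigma<\min(1,r)$, $\rho_A$ is an increasing function of $\sigma$ when $r>1$ and a decreasing function of $\sigma$ when $r<1$; and when $r=1$, $\rho_A=1/N$ for all $\sigma\in[0,1)$.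
   Context: A proper two-coloring assigns each vertex green or red so that adjacent vertices have different colors. Each vertex holds a type $A$ or type $B$ individual; $A$ has fitness $a_{\mathrm{G}}$ on green and $a_{\mathrm{R}}$ on red vertices, $B$ has $b_{\mathrm{G}}$ on green and $b_{\mathrm{R}}$ on red. Colored Moran process: each step an individual is chosen to reproduce with probability proportional to fitness and its offspring replaces a uniformly random neighbor. The mean fixation probability of $A$ is the probability that a single $A$, placed at a uniformly random vertex in an all-$B$ population, eventually takes over. *)

theory Defs
  imports Complex_Main
begin

definition simple_graph :: "'v set \<Rightarrow> ('v \<Rightarrow> 'v \<Rightarrow> bool) \<Rightarrow> bool" where
  "simple_graph V E \<longleftrightarrow> finite V \<and> (\<forall>x y. E x y \<longrightarrow> x \<in> V \<and> y \<in> V)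
     \<and> (\<forall>x y. E x y \<longrightarrow> E y x) \<and> (\<forall>x. \<not> E x x)"

definition connected_graph :: "'v set \<Rightarrow> ('v \<Rightarrow> 'v \<Rightarrow> bool) \<Rightarrow> bool" where
  "connected_graph V E \<longleftrightarrow> V \<noteq> {} \<and> (\<forall>u\<in>V. \<forall>v\<in>V. E\<^sup>*\<^sup>* u v)"

definition deg :: "'v set \<Rightarrow> ('v \<Rightarrow> 'v \<Rightarrow> bool) \<Rightarrow> 'v \<Rightarrow> nat" where
  "deg V E v = card {w\<in>V. E v w}"

definition regular_graph :: "'v set \<Rightarrow> ('v \<Rightarrow> 'v \<Rightarrow> bool) \<Rightarrow> bool" where
  "regular_graph V E \<longleftrightarrow> (\<exists>k. \<forall>v\<in>V. deg V E v = k)"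

definition proper_two_coloring :: "('v \<Rightarrow> 'v \<Rightarrow> bool) \<Rightarrow> ('v \<Rightarrow> bool) \<Rightarrow> bool" where
  "proper_two_coloring E green \<longleftrightarrow> (\<forall>x y. E x y \<longrightarrow> green x \<noteq> green y)"

text \<open>Fitness of the individual at vertex i when S is the set of vertices holding type A.\<close>
definition fitness :: "('v \<Rightarrow> bool) \<Rightarrow> real \<Rightarrow> real \<Rightarrow> real \<Rightarrow> real \<Rightarrow> 'v set \<Rightarrow> 'v \<Rightarrow> real" where
  "fitness green aG aR bG bR S i =
     (if i \<in> S then (if green i then aG else aR) else (if green i then bG else bR))"

definition total_fitness :: "'v set \<Rightarrow> ('v \<Rightarrow> bool) \<Rightarrow> real \<Rightarrow> real \<Rightarrow> real \<Rightarrow> real \<Rightarrow> 'v set \<Rightarrow> real" where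
  "total_fitness V green aG aR bG bR S = (\<Sum>i\<in>V. fitness green aG aR bG bR S i)"

definition offspring_state :: "'v set \<Rightarrow> 'v \<Rightarrow> 'v \<Rightarrow> 'v set" where
  "offspring_state S i j = (if i \<in> S then insert j S else S - {j})"

text \<open>Probability that the chain started in S is in the all-A state V after n steps
  (V is absorbing, so this is the probability of fixation within n steps).\<close>
fun fix_within :: "'v set \<Rightarrow> ('v \<Rightarrow> 'v \<Rightarrow> bool) \<Rightarrow> ('v \<Rightarrow> bool)
    \<Rightarrow> real \<Rightarrow> real \<Rightarrow> real \<Rightarrow> real \<Rightarrow> nat \<Rightarrow> 'v set \<Rightarrow> real" where
  "fix_within V E green aG aR bG bR 0 S = (if S = V then 1 else 0)"
| "fix_within V E green aG aR bG bR (Suc n) S =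
     (\<Sum>i\<in>V. \<Sum>j\<in>{w\<in>V. E i w}.
        fitness green aG aR bG bR S i / total_fitness V green aG aR bG bR S * (1 / real (deg V E i))
        * fix_within V E green aG aR bG bR n (offspring_state S i j))"

definition fixation_prob :: "'v set \<Rightarrow> ('v \<Rightarrow> 'v \<Rightarrow> bool) \<Rightarrow> ('v \<Rightarrow> bool)
    \<Rightarrow> real \<Rightarrow> real \<Rightarrow> real \<Rightarrow> real \<Rightarrow> 'v set \<Rightarrow> real" where
  "fixation_prob V E green aG aR bG bR S = lim (\<lambda>n. fix_within V E green aG aR bG bR n S)"

definition mean_fixation_A :: "'v set \<Rightarrow> ('v \<Rightarrow> 'v \<Rightarrow> bool) \<Rightarrow> ('v \<Rightarrow> bool)
    \<Rightarrow> real \<Rightarrow> real \<Rightarrow> real \<Rightarrow> real \<Rightarrow> real" where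
  "mean_fixation_A V E green aG aR bG bR =
     (\<Sum>v\<in>V. fixation_prob V E green aG aR bG bR {v}) / real (card V)"

end

theory Submission
  imports Defs
begin


lemma crossing: "E\<^sup>*\<^sup>* u v \<Longrightarrow> u \<in> S \<Longrightarrow> v \<notin> S \<Longrightarrow> \<exists>i j. i \<in> S \<and> j \<notin> S \<and> E i j"
  by (induction rule: rtranclp_induct) blast+

locale moran =
  fixes V :: "'v set" and E :: "'v \<Rightarrow> 'v \<Rightarrow> bool" and green :: "'v \<Rightarrow> bool"
    and aG aR bG bR :: real and k :: nat
  assumes sg: "simple_graph V E" and conn: "connected_graph V E"
    and degk: "\<And>v. v \<in> V \<Longrightarrow> deg V E v = k" and kpos: "k > 0"
    and pos: "aG > 0" "aR > 0" "bG > 0" "bR > 0"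
begin

definition P :: "('v set \<Rightarrow> real) \<Rightarrow> 'v set \<Rightarrow> real" where
 "P f S = (\<Sum>i\<in>V. \<Sum>j\<in>{w\<in>V. E i w}.
        fitness green aG aR bG bR S i / total_fitness V green aG aR bG bR S * (1 / real (deg V E i))
        * f (offspring_state S i j))"

abbreviation fit where "fit S i \<equiv> fitness green aG aR bG bR S i"
abbreviation F where "F S \<equiv> total_fitness V green aG aR bG bR S"
abbreviation g where "g n \<equiv> fix_within V E green aG aR bG bR n"

lemma g_Suc: "g (Suc n) S = P (g n) S" by (simp add: P_def)

lemma finV: "finite V" using sg by (simp add: simple_graph_def)
lemma Vne: "V \<noteq> {}" using conn by (simp add: connected_graph_def)
lemma EV: "E i j \<Longrightarrow> i \<in> V \<and> j \<in> V" using sg by (simp add: simple_graph_def)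
lemma Esym: "E i j \<Longrightarrow> E j i" using sg by (simp add: simple_graph_def)

lemma fit_pos: "fit S i > 0" using pos by (simp add: fitness_def)
lemma F_pos: "F S > 0" unfolding total_fitness_def
  by (rule sum_pos[OF finV Vne]) (simp add: fit_pos)

lemma w_nonneg: "0 \<le> fit S i / F S * (1 / real (deg V E i))"
  using fit_pos[of S i] F_pos[of S] by simp

lemma P_alt: "P f S = (\<Sum>i\<in>V. \<Sum>j\<in>{w\<in>V. E i w}. fit S i * f (offspring_state S i j)) / (F S * k)"
proof -
  have "P f S = (\<Sum>i\<in>V. \<Sum>j\<in>{w\<in>V. E i w}. fit S i * f (offspring_state S i j) / (F S * k))"
    unfolding P_def by (intro sum.cong refl) (simp add: degk)
  also have "\<dots> = (\<Sum>i\<in>V. \<Sum>j\<in>{w\<in>V. E i w}. fit S i * f (offspring_state S i j)) / (F S * k)"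
    by (simp add: sum_divide_distrib)
  finally show ?thesis .
qed

lemma P_const: "P (\<lambda>_. c) S = c"
proof -
  have "(\<Sum>i\<in>V. \<Sum>j\<in>{w\<in>V. E i w}. fit S i * c) = (\<Sum>i\<in>V. k * (fit S i * c))"
    by (intro sum.cong refl) (simp add: degk[unfolded deg_def])
  also have "\<dots> = k * c * F S" by (simp add: total_fitness_def sum_distrib_left algebra_simps)
  finally show ?thesis using F_pos[of S] kpos by (simp add: P_alt)
qed

lemma P_diff: "P (\<lambda>S. f S - h S) S = P f S - P h S"
  unfolding P_def by (simp add: sum_subtractf[symmetric] right_diff_distrib)
lemma P_add: "P (\<lambda>S. f S + h S) S = P f S + P h S"
  unfolding P_def by (simp add: sum.distrib[symmetric] distrib_left)
lemma P_scale: "P (\<lambda>S. c * f S) S = c * P f S"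
  unfolding P_def by (simp add: sum_distrib_left mult_ac)

lemma off_sub: "S \<subseteq> V \<Longrightarrow> j \<in> V \<Longrightarrow> offspring_state S i j \<subseteq> V"
  by (auto simp: offspring_state_def)

lemma P_mono: assumes "S \<subseteq> V" "\<And>S'. S' \<subseteq> V \<Longrightarrow> f S' \<le> h S'" shows "P f S \<le> P h S"
  unfolding P_def
  by (intro sum_mono mult_left_mono w_nonneg assms(2) off_sub[OF assms(1)]) auto

lemma P_cong: assumes "S \<subseteq> V" "\<And>S'. S' \<subseteq> V \<Longrightarrow> f S' = h S'" shows "P f S = P h S"
  using P_mono[OF assms(1), of f h] P_mono[OF assms(1), of h f] assms(2) by force

lemma P_abs: assumes "S \<subseteq> V" "\<And>S'. S' \<subseteq> V \<Longrightarrow> \<bar>f S'\<bar> \<le> h S'" shows "\<bar>P f S\<bar> \<le> P h S"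
proof -
  have a: "(-1) * h S' \<le> f S' \<and> f S' \<le> h S'" if "S' \<subseteq> V" for S'
    using assms(2)[OF that] by (simp add: abs_le_iff)
  have "P f S \<le> P h S" using a by (intro P_mono[OF assms(1)]) auto
  moreover have "P (\<lambda>S. (-1) * h S) S \<le> P f S" using a by (intro P_mono[OF assms(1)]) auto
  ultimately show ?thesis using P_scale[of "-1" h S] by (simp add: abs_le_iff)
qed

lemma P_absorb: assumes "S = V \<or> S = {}" shows "P f S = f S"
proof -
  have "P f S = P (\<lambda>_. f S) S" unfolding P_def
    using assms by (intro sum.cong refl) (auto simp: offspring_state_def insert_absorb)
  then show ?thesis by (simp add: P_const)
qed


lemma P_harm:
  assumes br: "\<And>i j. E i j \<Longrightarrow> i \<in> S \<Longrightarrow> j \<notin> S \<Longrightarrow>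
     fit S i * (\<phi> (insert j S) - \<phi> S) + fit S j * (\<phi> (S - {i}) - \<phi> S) = 0"
  shows "P \<phi> S = \<phi> S"
proof -
  define D where "D i j = (if E i j then fit S i * (\<phi> (offspring_state S i j) - \<phi> S) else 0)" for i j
  have DD: "D i j + D j i = 0" for i j
  proof (cases "E i j")
    case True
    hence "E j i" by (rule Esym)
    show ?thesis
    proof (cases "i \<in> S"; cases "j \<in> S")
      assume "i \<in> S" "j \<in> S" thus ?thesis by (simp add: D_def offspring_state_def insert_absorb)
    next
      assume "i \<notin> S" "j \<notin> S" thus ?thesis by (simp add: D_def offspring_state_def)
    next
      assume "i \<in> S" "j \<notin> S" thus ?thesis using br[OF True] True \<open>E j i\<close>
        by (simp add: D_def offspring_state_def)
    next
      assume "i \<notin> S" "j \<in> S" thus ?thesis using br[OF \<open>E j i\<close>] True \<open>E j i\<close>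
        by (simp add: D_def offspring_state_def)
    qed
  next
    case False
    hence "\<not> E j i" using Esym by blast
    with False show ?thesis by (simp add: D_def)
  qed
  have sum1: "(\<Sum>i\<in>V. \<Sum>j\<in>{w\<in>V. E i w}. fit S i * (\<phi> (offspring_state S i j) - \<phi> S))
      = (\<Sum>i\<in>V. \<Sum>j\<in>V. D i j)"
    by (rule sum.cong[OF refl]) (simp add: sum.inter_filter[OF finV] D_def)
  have "(\<Sum>i\<in>V. \<Sum>j\<in>V. D i j) = (\<Sum>i\<in>V. \<Sum>j\<in>V. D j i)"
    by (rule sum.swap)
  hence "2 * (\<Sum>i\<in>V. \<Sum>j\<in>V. D i j) = (\<Sum>i\<in>V. \<Sum>j\<in>V. D i j + D j i)"
    by (simp add: sum.distrib)
  also have "\<dots> = 0" by (simp add: DD)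
  finally have "(\<Sum>i\<in>V. \<Sum>j\<in>V. D i j) = 0" by simp
  hence "P (\<lambda>S'. \<phi> S' - \<phi> S) S = 0" by (simp add: P_alt sum1)
  thus ?thesis by (simp add: P_diff P_const)
qed

lemma Pn_Suc: "(P ^^ Suc n) f S = P ((P ^^ n) f) S" by simp

lemma Pn_const: "(P ^^ n) (\<lambda>_. c) = (\<lambda>_. c)"
  by (induction n) (simp_all add: P_const)

lemma Pn_diff: "(P ^^ n) (\<lambda>S. f S - h S) S = (P ^^ n) f S - (P ^^ n) h S"
proof (induction n arbitrary: S)
  case (Suc n)
  have "(P ^^ n) (\<lambda>S. f S - h S) = (\<lambda>S. (P ^^ n) f S - (P ^^ n) h S)" using Suc by (simp add: fun_eq_iff)
  thus ?case by (simp add: P_diff)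
qed simp

lemma Pn_add: "(P ^^ n) (\<lambda>S. f S + h S) S = (P ^^ n) f S + (P ^^ n) h S"
proof (induction n arbitrary: S)
  case (Suc n)
  have "(P ^^ n) (\<lambda>S. f S + h S) = (\<lambda>S. (P ^^ n) f S + (P ^^ n) h S)" using Suc by (simp add: fun_eq_iff)
  thus ?case by (simp add: P_add)
qed simp

lemma Pn_scale: "(P ^^ n) (\<lambda>S. c * f S) S = c * (P ^^ n) f S"
proof (induction n arbitrary: S)
  case (Suc n)
  have "(P ^^ n) (\<lambda>S. c * f S) = (\<lambda>S. c * (P ^^ n) f S)" using Suc by (simp add: fun_eq_iff)
  thus ?case by (simp add: P_scale)
qed simp

lemma Pn_mono: "S \<subseteq> V \<Longrightarrow> (\<And>S'. S' \<subseteq> V \<Longrightarrow> f S' \<le> h S') \<Longrightarrow> (P ^^ n) f S \<le> (P ^^ n) h S"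
proof (induction n arbitrary: S)
  case (Suc n)
  show ?case unfolding Pn_Suc by (rule P_mono[OF Suc.prems(1)]) (rule Suc.IH[OF _ Suc.prems(2)])
qed simp

lemma Pn_abs: "S \<subseteq> V \<Longrightarrow> (\<And>S'. S' \<subseteq> V \<Longrightarrow> \<bar>f S'\<bar> \<le> h S') \<Longrightarrow> \<bar>(P ^^ n) f S\<bar> \<le> (P ^^ n) h S"
proof (induction n arbitrary: S)
  case (Suc n)
  show ?case unfolding Pn_Suc by (rule P_abs[OF Suc.prems(1)]) (rule Suc.IH[OF _ Suc.prems(2)])
qed simp

lemma Pn_absorb: "S = V \<or> S = {} \<Longrightarrow> (P ^^ n) f S = f S"
  by (induction n) (simp_all add: P_absorb)

lemma Pn_harm: "(\<And>S. S \<subseteq> V \<Longrightarrow> P \<phi> S = \<phi> S) \<Longrightarrow> S \<subseteq> V \<Longrightarrow> (P ^^ n) \<phi> S = \<phi> S"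
proof (induction n arbitrary: S)
  case (Suc n)
  have "P ((P ^^ n) \<phi>) S = P \<phi> S" by (rule P_cong[OF Suc.prems(2)]) (rule Suc.IH[OF Suc.prems(1)])
  thus ?case using Suc.prems by simp
qed simp

lemma g_Pn: "g n = (P ^^ n) (g 0)"
proof (induction n)
  case (Suc n)
  show ?case by (rule ext, simp only: funpow.simps comp_apply Suc[symmetric], rule g_Suc)
qed simp


definition cc :: real where
  "cc = min (min aG aR) (min bG bR) / (real (card V) * max (max aG aR) (max bG bR) * real k)"

lemma cardV: "card V > 0" using finV Vne by (simp add: card_gt_0_iff)

lemma cc_pos: "cc > 0" using pos cardV kpos by (simp add: cc_def)

lemma cc_le1: "cc \<le> 1"
proof -
  have m: "0 < max (max aG aR) (max bG bR)" using pos by simp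
  have N1: "1 \<le> real (card V)" and k1: "1 \<le> real k" using cardV kpos by auto
  have "(1::real) \<le> 1 * 1" by simp
  also have "\<dots> \<le> real (card V) * real k" by (rule mult_mono) (use N1 k1 in auto)
  finally have Nk: "1 \<le> real (card V) * real k" .
  have "min (min aG aR) (min bG bR) \<le> max (max aG aR) (max bG bR) * 1" by linarith
  also have "\<dots> \<le> max (max aG aR) (max bG bR) * (real (card V) * real k)"
    by (rule mult_left_mono[OF Nk]) (use m in auto)
  finally show ?thesis using pos cardV kpos by (simp add: cc_def divide_le_eq_1 mult_ac)
qed

lemma w_lower: assumes "i \<in> V" shows "cc \<le> fit S i / F S * (1 / real (deg V E i))"
proof -
  have f1: "min (min aG aR) (min bG bR) \<le> fit S i" unfolding fitness_def by (auto simp: min_le_iff_disj)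
  have "F S \<le> real (card V) * max (max aG aR) (max bG bR)"
    unfolding total_fitness_def
    by (rule order_trans[OF sum_bounded_above[of V _ "max (max aG aR) (max bG bR)"]]) (auto simp: fitness_def)
  hence f2: "F S * real k \<le> real (card V) * max (max aG aR) (max bG bR) * real k"
    by (simp add: mult_right_mono)
  have "cc \<le> fit S i / (F S * real k)" unfolding cc_def
    by (rule frac_le) (use f1 f2 pos F_pos[of S] kpos fit_pos[of S i] in auto)
  thus ?thesis using degk[OF assms] by simp
qed

lemma g_nonneg: "0 \<le> g n S"
proof (induction n arbitrary: S)
  case (Suc n) show ?case by (simp only: fix_within.simps) (intro sum_nonneg mult_nonneg_nonneg w_nonneg Suc)
qed simp

lemma exists_edge: assumes "S \<subseteq> V" "S \<noteq> {}"
  shows "\<exists>i j. i \<in> S \<and> E i j \<and> (S \<noteq> V \<longrightarrow> j \<notin> S)"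
proof (cases "S = V")
  case True
  then obtain i where i: "i \<in> S" using assms by auto
  have "card {w\<in>V. E i w} = k" using degk[of i] i True by (simp add: deg_def)
  hence "card {w\<in>V. E i w} > 0" using kpos by simp
  hence "{w\<in>V. E i w} \<noteq> {}" by (metis card.empty less_irrefl)
  thus ?thesis using i True by auto
next
  case False
  obtain u v where "u \<in> S" "v \<in> V" "v \<notin> S" using assms False by auto
  moreover have "E\<^sup>*\<^sup>* u v" using conn \<open>u \<in> S\<close> \<open>v \<in> V\<close> assms(1) by (auto simp: connected_graph_def)
  ultimately show ?thesis using crossing[of E u v S] by blast
qed

lemma g_lower: "S \<subseteq> V \<Longrightarrow> S \<noteq> {} \<Longrightarrow> card (V - S) \<le> n \<Longrightarrow> cc ^ n \<le> g n S"
proof (induction n arbitrary: S)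
  case 0
  hence "S = V" using finV by auto
  thus ?case by simp
next
  case (Suc n)
  obtain i j where ij: "i \<in> S" "E i j" "S \<noteq> V \<longrightarrow> j \<notin> S" using exists_edge[OF Suc.prems(1,2)] by blast
  have iV: "i \<in> V" and jV: "j \<in> V" using EV[OF ij(2)] by auto
  have off: "offspring_state S i j = insert j S" using ij by (simp add: offspring_state_def)
  have sub: "insert j S \<subseteq> V" using Suc.prems jV by auto
  have card: "card (V - insert j S) \<le> n"
  proof (cases "S = V")
    case True thus ?thesis using jV by (simp add: insert_absorb)
  next
    case False
    hence "j \<in> V - S" using ij jV by auto
    hence "card (V - insert j S) = card (V - S) - 1"
      using finV by (metis Diff_insert card_Diff_singleton finite_Diff)
    thus ?thesis using Suc.prems(3) by simp
  qed
  have IH: "cc ^ n \<le> g n (insert j S)" using Suc.IH[OF sub _ card] by blast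
  define T where "T i' j' = fit S i' / F S * (1 / real (deg V E i')) * g n (offspring_state S i' j')" for i' j'
  have Tnn: "0 \<le> T i' j'" for i' j' unfolding T_def by (intro mult_nonneg_nonneg w_nonneg g_nonneg)
  have "cc ^ Suc n = cc * cc ^ n" by simp
  also have "\<dots> \<le> T i j" unfolding T_def off
    by (rule mult_mono[OF w_lower[OF iV] IH]) (use cc_pos w_nonneg in auto)
  also have "\<dots> \<le> (\<Sum>j'\<in>{w\<in>V. E i w}. T i j')"
    by (rule member_le_sum) (use ij jV finV Tnn in auto)
  also have "\<dots> \<le> (\<Sum>i'\<in>V. \<Sum>j'\<in>{w\<in>V. E i' w}. T i' j')"
    by (rule member_le_sum[where f = "\<lambda>i'. \<Sum>j'\<in>{w\<in>V. E i' w}. T i' j'"])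
       (use iV finV Tnn in \<open>auto intro: sum_nonneg\<close>)
  also have "\<dots> = g (Suc n) S" by (simp add: T_def)
  finally show ?case .
qed


definition T1 :: "'v set \<Rightarrow> real" where "T1 S = (if S \<noteq> {} \<and> S \<noteq> V then 1 else 0)"
lemma g_Pn': "(P ^^ n) (\<lambda>S. if S = V then 1 else 0) = g n"
proof -
  have "g 0 = (\<lambda>S. if S = V then 1 else 0)" by (rule ext) simp
  thus ?thesis using g_Pn[of n] by simp
qed

abbreviation t where "t n \<equiv> (P ^^ n) T1"
abbreviation \<delta> where "\<delta> \<equiv> cc ^ card V"

lemma delta: "0 < \<delta>" "\<delta> \<le> 1" using cc_pos cc_le1 by (auto intro: power_le_one)

lemma t_nonneg: "S \<subseteq> V \<Longrightarrow> 0 \<le> t n S"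
  using Pn_mono[of S "\<lambda>_. 0" T1 n] by (simp add: Pn_const T1_def)

lemma t_step: assumes "S \<subseteq> V" shows "t (card V) S \<le> (1 - \<delta>) * T1 S"
proof (cases "S = V \<or> S = {}")
  case True thus ?thesis by (auto simp: Pn_absorb T1_def)
next
  case False
  hence ne: "S \<noteq> {}" and T: "T1 S = 1" by (auto simp: T1_def)
  have "card (V - S) \<le> card V" using finV by (simp add: card_mono)
  hence low: "\<delta> \<le> g (card V) S" by (rule g_lower[OF assms ne])
  have "t (card V) S + g (card V) S = (P ^^ card V) (\<lambda>S. T1 S + g 0 S) S"
    by (simp add: Pn_add g_Pn')
  also have "\<dots> \<le> (P ^^ card V) (\<lambda>_. 1) S"
    by (rule Pn_mono[OF assms]) (auto simp: T1_def)
  also have "\<dots> = 1" by (simp add: Pn_const)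
  finally show ?thesis using low T by simp
qed

lemma P_T1: "S \<subseteq> V \<Longrightarrow> P T1 S \<le> T1 S"
proof (cases "S = V \<or> S = {}")
  case True thus ?thesis by (simp add: P_absorb)
next
  case False
  assume S: "S \<subseteq> V"
  have "P T1 S \<le> P (\<lambda>_. 1) S" by (rule P_mono[OF S]) (simp add: T1_def)
  thus ?thesis using False by (simp add: P_const T1_def)
qed

lemma t_dec: "S \<subseteq> V \<Longrightarrow> t (Suc n) S \<le> t n S"
  unfolding funpow_Suc_right comp_def by (rule Pn_mono) (auto intro: P_T1)

lemma t_mult: "S \<subseteq> V \<Longrightarrow> t (m * card V) S \<le> (1 - \<delta>) ^ m"
proof (induction m arbitrary: S)
  case 0 thus ?case by (simp add: T1_def)
next
  case (Suc m)
  have "t (Suc m * card V) S = (P ^^ (m * card V)) (t (card V)) S"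
    by (simp only: mult_Suc add.commute[of "card V"] funpow_add comp_apply)
  also have "\<dots> \<le> (P ^^ (m * card V)) (\<lambda>S. (1 - \<delta>) * T1 S) S"
    by (rule Pn_mono[OF Suc.prems]) (rule t_step)
  also have "\<dots> = (1 - \<delta>) * t (m * card V) S" by (rule Pn_scale)
  also have "\<dots> \<le> (1 - \<delta>) * (1 - \<delta>) ^ m"
    by (rule mult_left_mono[OF Suc.IH[OF Suc.prems]]) (use delta in auto)
  finally show ?case by simp
qed

lemma t_lim: assumes "S \<subseteq> V" shows "(\<lambda>n. t n S) \<longlonglongrightarrow> 0"
proof (rule tendsto_sandwich[where f = "\<lambda>_. 0" and h = "\<lambda>n. (1 - \<delta>) ^ (n div card V)"])
  show "\<forall>\<^sub>F n in sequentially. 0 \<le> t n S" using t_nonneg[OF assms] by simp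
  have "t n S \<le> (1 - \<delta>) ^ (n div card V)" for n
  proof -
    have "t n S \<le> t (n div card V * card V) S"
      by (rule lift_Suc_antimono_le[of "\<lambda>n. t n S"]) (use t_dec[OF assms] in auto)
    also have "\<dots> \<le> (1 - \<delta>) ^ (n div card V)" by (rule t_mult[OF assms])
    finally show ?thesis .
  qed
  thus "\<forall>\<^sub>F n in sequentially. t n S \<le> (1 - \<delta>) ^ (n div card V)" by simp
  show "(\<lambda>_. 0) \<longlonglongrightarrow> (0::real)" by simp
  have "(\<lambda>n. (1 - \<delta>) ^ n) \<longlonglongrightarrow> 0" by (rule LIMSEQ_power_zero) (use delta in auto)
  thus "(\<lambda>n. (1 - \<delta>) ^ (n div card V)) \<longlonglongrightarrow> 0"
    using filterlim_compose filterlim_at_top_div_const_nat[OF cardV] by blast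
qed

theorem fix_prob:
  assumes harm: "\<And>S. S \<subseteq> V \<Longrightarrow> P \<phi> S = \<phi> S" and b1: "\<phi> V = 1" and b0: "\<phi> {} = 0"
    and S: "S \<subseteq> V"
  shows "fixation_prob V E green aG aR bG bR S = \<phi> S"
proof -
  define M where "M = (\<Sum>S'\<in>Pow V. \<bar>\<phi> S'\<bar>)"
  have M: "\<bar>\<phi> S'\<bar> \<le> M" if "S' \<subseteq> V" for S'
    unfolding M_def by (rule member_le_sum) (use that finV in auto)
  have u: "\<bar>\<phi> S' - g 0 S'\<bar> \<le> M * T1 S'" if "S' \<subseteq> V" for S'
    using M[OF that] b1 b0 Vne by (auto simp: T1_def)
  have bnd: "\<bar>g n S - \<phi> S\<bar> \<le> M * t n S" for n
  proof -
    have "\<bar>(P ^^ n) (\<lambda>S. \<phi> S - g 0 S) S\<bar> \<le> (P ^^ n) (\<lambda>S. M * T1 S) S"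
      by (rule Pn_abs[OF S u])
    also have "\<dots> = M * t n S" by (rule Pn_scale)
    finally show ?thesis
      by (simp add: Pn_diff Pn_harm[OF harm S] g_Pn' abs_minus_commute)
  qed
  have b2: "- (M * t n S) \<le> g n S - \<phi> S \<and> g n S - \<phi> S \<le> M * t n S" for n
    using bnd[of n] unfolding abs_le_iff by linarith
  have Mt: "(\<lambda>n. M * t n S) \<longlonglongrightarrow> 0" using tendsto_mult_right_zero[OF t_lim[OF S]] by simp
  hence "(\<lambda>n. g n S - \<phi> S) \<longlonglongrightarrow> 0"
  proof (rule tendsto_sandwich[rotated 3, where f = "\<lambda>n. - (M * t n S)"])
    show "\<forall>\<^sub>F n in sequentially. - (M * t n S) \<le> g n S - \<phi> S"
      "\<forall>\<^sub>F n in sequentially. g n S - \<phi> S \<le> M * t n S"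
      using b2 by (auto intro!: always_eventually)
    show "(\<lambda>n. - (M * t n S)) \<longlonglongrightarrow> 0" using tendsto_minus[OF Mt] by simp
  qed
  hence "(\<lambda>n. g n S) \<longlonglongrightarrow> \<phi> S" by (simp add: LIM_zero_iff)
  thus ?thesis unfolding fixation_prob_def by (rule limI)
qed

end


lemma sum_color:
  fixes a b :: real
  assumes "finite V"
  shows "(\<Sum>v\<in>V. if green v then a else b) = card {v\<in>V. green v} * a + card {v\<in>V. \<not> green v} * b"
proof -
  have "V \<inter> {x. green x} = {v\<in>V. green v}" "V \<inter> - {x. green x} = {v\<in>V. \<not> green v}" by auto
  thus ?thesis using sum.If_cases[OF assms, of green "\<lambda>_. a" "\<lambda>_. b"] by simp
qed

lemma prod_color:
  fixes a b :: real
  assumes "finite V"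
  shows "(\<Prod>v\<in>V. if green v then a else b) = a ^ card {v\<in>V. green v} * b ^ card {v\<in>V. \<not> green v}"
proof -
  have "V \<inter> {x. green x} = {v\<in>V. green v}" "V \<inter> - {x. green x} = {v\<in>V. \<not> green v}" by auto
  thus ?thesis using prod.If_cases[OF assms, of green "\<lambda>_. a" "\<lambda>_. b"] by simp
qed

lemma alg1: "(D::real) \<noteq> 0 \<Longrightarrow> a * ((1 - tj * (ti * h')) / D - (1 - ti * h') / D) + b * ((1 - h') / D - (1 - ti * h') / D)
   = h' / D * (a * ti * (1 - tj) + b * (ti - 1))"
  by (simp add: field_simps)

lemma rho_formula:
  fixes V :: "'v set" and E green and k n :: nat and r \<sigma> :: real
  assumes sg: "simple_graph V E" and conn: "connected_graph V E"
    and degk: "\<And>v. v \<in> V \<Longrightarrow> deg V E v = k" and kpos: "k > 0"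
    and col: "proper_two_coloring E green"
    and cg: "card {v\<in>V. green v} = n" and cr: "card {v\<in>V. \<not> green v} = n" and cV: "card V = 2 * n"
    and n1: "n \<ge> 1"
    and r: "r > 0" "r \<noteq> 1" and s: "0 \<le> \<sigma>" "\<sigma> < min 1 r"
  shows "mean_fixation_A V E green (r + \<sigma>) (r - \<sigma>) (1 + \<sigma>) (1 - \<sigma>) =
     r * (r - 1) / ((r\<^sup>2 - \<sigma>\<^sup>2) * (1 - ((1 - \<sigma>\<^sup>2) / (r\<^sup>2 - \<sigma>\<^sup>2)) ^ n))"
proof -
  have s1: "\<sigma> < 1" "\<sigma> < r" using s by auto
  interpret moran V E green "r + \<sigma>" "r - \<sigma>" "1 + \<sigma>" "1 - \<sigma>" k
    by unfold_locales (use sg conn degk kpos r s1 s in auto)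
  define p where "p = (1 - \<sigma>) / (r - \<sigma>)"
  define q where "q = (1 + \<sigma>) / (r + \<sigma>)"
  define x where "x = (1 - \<sigma>\<^sup>2) / (r\<^sup>2 - \<sigma>\<^sup>2)"
  have pq: "p * q = x" unfolding p_def q_def x_def using s1 by (simp add: field_simps power2_eq_square)
  have ppos: "p > 0" "q > 0" unfolding p_def q_def using s1 s by auto
  have x1: "x \<noteq> 1"
  proof
    assume "x = 1"
    hence "1 - \<sigma>\<^sup>2 = r\<^sup>2 - \<sigma>\<^sup>2" unfolding x_def using s1 s
      by (simp add: field_simps power2_eq_square split: if_splits)
    hence "r\<^sup>2 = 1" by simp
    hence "r = 1" using r by (auto simp: power2_eq_1_iff)
    thus False using r by simp
  qed
  have xn: "x ^ n \<noteq> 1"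
  proof
    assume "x ^ n = 1"
    hence "x ^ n = 1 ^ n" by simp
    hence "x = 1" using power_eq_iff_eq_base[of n x 1] n1 pq[symmetric] ppos by simp
    thus False using x1 by simp
  qed
  define D where "D = 1 - x ^ n"
  have D0: "D \<noteq> 0" using xn by (simp add: D_def)
  define tt where "tt v = (if green v then p else q)" for v
  define \<phi> where "\<phi> S = (1 - (\<Prod>v\<in>S. tt v)) / D" for S
  have nz: "r - \<sigma> \<noteq> 0" "r + \<sigma> \<noteq> 0" using s1 s by auto
  have "\<sigma> * \<sigma> < r * r" using s1 s by (intro mult_strict_mono) auto
  hence rs: "r * r - \<sigma> * \<sigma> \<noteq> 0" by simp
  have K1: "(r + \<sigma>) * p * (1 - q) + (1 - \<sigma>) * (p - 1) = 0"
    unfolding p_def q_def using nz rs by (simp add: field_simps)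
  have K2: "(r - \<sigma>) * q * (1 - p) + (1 + \<sigma>) * (q - 1) = 0"
    unfolding p_def q_def using nz rs by (simp add: field_simps)
  have harm: "P \<phi> S = \<phi> S" if S: "S \<subseteq> V" for S
  proof (rule P_harm)
    fix i j assume ij: "E i j" "i \<in> S" "j \<notin> S"
    have fS: "finite S" using S finite_subset finV by blast
    have gij: "green j = (\<not> green i)" using col ij(1) by (auto simp: proper_two_coloring_def)
    define h' where "h' = (\<Prod>v\<in>S - {i}. tt v)"
    have hS: "(\<Prod>v\<in>S. tt v) = tt i * h'" unfolding h'_def using prod.remove[OF fS ij(2)] .
    have hI: "(\<Prod>v\<in>insert j S. tt v) = tt j * (tt i * h')" using fS ij(3) hS by simp
    have "fitness green (r + \<sigma>) (r - \<sigma>) (1 + \<sigma>) (1 - \<sigma>) S i * (\<phi> (insert j S) - \<phi> S) +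
          fitness green (r + \<sigma>) (r - \<sigma>) (1 + \<sigma>) (1 - \<sigma>) S j * (\<phi> (S - {i}) - \<phi> S)
       = h' / D * (fitness green (r + \<sigma>) (r - \<sigma>) (1 + \<sigma>) (1 - \<sigma>) S i * tt i * (1 - tt j)
            + fitness green (r + \<sigma>) (r - \<sigma>) (1 + \<sigma>) (1 - \<sigma>) S j * (tt i - 1))"
      unfolding \<phi>_def hS hI h'_def[symmetric] by (rule alg1[OF D0])
    also have "\<dots> = 0" using ij gij K1 K2 by (cases "green i") (simp_all add: fitness_def tt_def)
    finally show "fitness green (r + \<sigma>) (r - \<sigma>) (1 + \<sigma>) (1 - \<sigma>) S i * (\<phi> (insert j S) - \<phi> S) +
          fitness green (r + \<sigma>) (r - \<sigma>) (1 + \<sigma>) (1 - \<sigma>) S j * (\<phi> (S - {i}) - \<phi> S) = 0" .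
  qed
  have hV: "(\<Prod>v\<in>V. tt v) = x ^ n"
    unfolding tt_def using prod_color[OF finV, of green p q] cg cr pq[symmetric] by (simp add: power_mult_distrib)
  have b1: "\<phi> V = 1" unfolding \<phi>_def hV D_def using D0 D_def by simp
  have b0: "\<phi> {} = 0" by (simp add: \<phi>_def)
  have fp: "fixation_prob V E green (r + \<sigma>) (r - \<sigma>) (1 + \<sigma>) (1 - \<sigma>) {v} = (1 - tt v) / D" if "v \<in> V" for v
    using fix_prob[of \<phi> "{v}", OF harm b1 b0] that by (simp add: \<phi>_def)
  have "(\<Sum>v\<in>V. fixation_prob V E green (r + \<sigma>) (r - \<sigma>) (1 + \<sigma>) (1 - \<sigma>) {v}) = (\<Sum>v\<in>V. (1 - tt v) / D)"
    by (rule sum.cong) (simp_all add: fp)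
  also have "\<dots> = (\<Sum>v\<in>V. if green v then 1 - p else 1 - q) / D"
    by (simp add: sum_divide_distrib tt_def if_distrib)
  also have "\<dots> = (n * (1 - p) + n * (1 - q)) / D" using sum_color[OF finV, of green] cg cr by simp
  finally have sm: "(\<Sum>v\<in>V. fixation_prob V E green (r + \<sigma>) (r - \<sigma>) (1 + \<sigma>) (1 - \<sigma>) {v}) = (n * (1 - p) + n * (1 - q)) / D" .
  have key: "(2 - p - q) / 2 = r * (r - 1) / (r\<^sup>2 - \<sigma>\<^sup>2)"
    unfolding p_def q_def using s1 s rs by (simp add: field_simps power2_eq_square)
  have "mean_fixation_A V E green (r + \<sigma>) (r - \<sigma>) (1 + \<sigma>) (1 - \<sigma>) = (n * (1 - p) + n * (1 - q)) / D / (2 * n)"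
    unfolding mean_fixation_A_def sm cV by simp
  also have "\<dots> = ((2 - p - q) / 2) / D" using n1 D0 by (simp add: field_simps)
  also have "\<dots> = r * (r - 1) / ((r\<^sup>2 - \<sigma>\<^sup>2) * (1 - x ^ n))" unfolding key D_def by simp
  finally show ?thesis unfolding x_def .
qed

lemma rho_one:
  fixes V :: "'v set" and E green and k n :: nat and \<sigma> :: real
  assumes sg: "simple_graph V E" and conn: "connected_graph V E"
    and degk: "\<And>v. v \<in> V \<Longrightarrow> deg V E v = k" and kpos: "k > 0"
    and col: "proper_two_coloring E green"
    and cg: "card {v\<in>V. green v} = n" and cr: "card {v\<in>V. \<not> green v} = n" and cV: "card V = 2 * n"
    and n1: "n \<ge> 1"
    and s: "0 \<le> \<sigma>" "\<sigma> < 1"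
  shows "mean_fixation_A V E green (1 + \<sigma>) (1 - \<sigma>) (1 + \<sigma>) (1 - \<sigma>) = 1 / real (card V)"
proof -
  interpret moran V E green "1 + \<sigma>" "1 - \<sigma>" "1 + \<sigma>" "1 - \<sigma>" k
    by unfold_locales (use sg conn degk kpos s in auto)
  define tt where "tt v = (if green v then 1 + \<sigma> else 1 - \<sigma>)" for v
  define \<phi> where "\<phi> S = (\<Sum>v\<in>S. tt v) / (2 * n)" for S
  have n0: "real n \<noteq> 0" using n1 by simp
  have harm: "P \<phi> S = \<phi> S" if S: "S \<subseteq> V" for S
  proof (rule P_harm)
    fix i j assume ij: "E i j" "i \<in> S" "j \<notin> S"
    have fS: "finite S" using S finite_subset finV by blast
    have gij: "green j = (\<not> green i)" using col ij(1) by (auto simp: proper_two_coloring_def)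
    define h' where "h' = (\<Sum>v\<in>S - {i}. tt v)"
    have hS: "(\<Sum>v\<in>S. tt v) = tt i + h'" unfolding h'_def using sum.remove[OF fS ij(2)] .
    have hI: "(\<Sum>v\<in>insert j S. tt v) = tt j + (tt i + h')" using fS ij(3) hS by simp
    show "fitness green (1 + \<sigma>) (1 - \<sigma>) (1 + \<sigma>) (1 - \<sigma>) S i * (\<phi> (insert j S) - \<phi> S) +
          fitness green (1 + \<sigma>) (1 - \<sigma>) (1 + \<sigma>) (1 - \<sigma>) S j * (\<phi> (S - {i}) - \<phi> S) = 0"
      unfolding \<phi>_def hS hI h'_def[symmetric] using ij gij n0
      by (cases "green i") (simp_all add: fitness_def tt_def field_simps)
  qed
  have hV: "(\<Sum>v\<in>V. tt v) = 2 * n"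
    unfolding tt_def using sum_color[OF finV, of green "1 + \<sigma>" "1 - \<sigma>"] cg cr by (simp add: algebra_simps)
  have b1: "\<phi> V = 1" unfolding \<phi>_def hV using n0 by simp
  have b0: "\<phi> {} = 0" by (simp add: \<phi>_def)
  have fp: "fixation_prob V E green (1 + \<sigma>) (1 - \<sigma>) (1 + \<sigma>) (1 - \<sigma>) {v} = tt v / (2 * n)" if "v \<in> V" for v
    using fix_prob[of \<phi> "{v}", OF harm b1 b0] that by (simp add: \<phi>_def)
  have "(\<Sum>v\<in>V. fixation_prob V E green (1 + \<sigma>) (1 - \<sigma>) (1 + \<sigma>) (1 - \<sigma>) {v}) = (\<Sum>v\<in>V. tt v / (2 * n))"
    by (rule sum.cong) (simp_all add: fp)
  also have "\<dots> = 1" using hV n0 by (simp add: sum_divide_distrib[symmetric])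
  finally show ?thesis unfolding mean_fixation_A_def by simp
qed

lemma rho_alt:
  fixes r \<sigma> :: real and n :: nat
  assumes n1: "n \<ge> 1" and r: "r > 0" "r \<noteq> 1" and s: "0 \<le> \<sigma>" "\<sigma> < min 1 r"
  shows "r * (r - 1) / ((r\<^sup>2 - \<sigma>\<^sup>2) * (1 - ((1 - \<sigma>\<^sup>2) / (r\<^sup>2 - \<sigma>\<^sup>2)) ^ n))
     = r / ((r + 1) * (\<Sum>m<n. ((1 - \<sigma>\<^sup>2) / (r\<^sup>2 - \<sigma>\<^sup>2)) ^ m))"
proof -
  define x where "x = (1 - \<sigma>\<^sup>2) / (r\<^sup>2 - \<sigma>\<^sup>2)"
  have "\<sigma> * \<sigma> < r * r" using s by (intro mult_strict_mono) auto
  hence rs: "r\<^sup>2 - \<sigma>\<^sup>2 > 0" by (simp add: power2_eq_square)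
  have "\<sigma> * \<sigma> < 1 * 1" using s by (intro mult_strict_mono) auto
  hence s2: "1 - \<sigma>\<^sup>2 > 0" by (simp add: power2_eq_square)
  have x0: "x \<ge> 0" unfolding x_def using rs s2 by simp
  have Spos: "(\<Sum>m<n. x ^ m) > 0"
  proof -
    have "(\<Sum>m<n. x ^ m) \<ge> (\<Sum>m\<in>{0}. x ^ m)"
      by (rule sum_mono2) (use n1 x0 in auto)
    thus ?thesis by simp
  qed
  have e1: "1 - x ^ n = (1 - x) * (\<Sum>m<n. x ^ m)" using power_diff_1_eq[of x n] by (simp add: algebra_simps)
  have e2: "(r\<^sup>2 - \<sigma>\<^sup>2) * (1 - x) = (r - 1) * (r + 1)" unfolding x_def using rs
    by (simp add: field_simps power2_eq_square)
  have "r * (r - 1) / ((r\<^sup>2 - \<sigma>\<^sup>2) * (1 - x ^ n)) = r * (r - 1) / (((r\<^sup>2 - \<sigma>\<^sup>2) * (1 - x)) * (\<Sum>m<n. x ^ m))"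
    unfolding e1 by (simp add: mult_ac)
  also have "\<dots> = r / ((r + 1) * (\<Sum>m<n. x ^ m))" proof -
    have "r - 1 \<noteq> 0" "r + 1 \<noteq> 0" using r by auto
    thus ?thesis unfolding e2 using Spos by (simp add: divide_simps)
  qed
  finally show ?thesis unfolding x_def .
qed

lemma x_le:
  fixes r a b :: real
  assumes "r\<^sup>2 - a > 0" "r\<^sup>2 - b > 0" "a \<le> b" "r\<^sup>2 \<ge> 1"
  shows "(1 - b) / (r\<^sup>2 - b) \<le> (1 - a) / (r\<^sup>2 - a)"
proof -
  have "(1 - b) * (r\<^sup>2 - a) \<le> (1 - a) * (r\<^sup>2 - b)"
  proof -
    have "(1 - a) * (r\<^sup>2 - b) - (1 - b) * (r\<^sup>2 - a) = (b - a) * (r\<^sup>2 - 1)" by (simp add: algebra_simps)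
    also have "\<dots> \<ge> 0" using assms by simp
    finally show ?thesis by simp
  qed
  thus ?thesis using assms by (simp add: divide_simps)
qed

lemma x_ge:
  fixes r a b :: real
  assumes "r\<^sup>2 - a > 0" "r\<^sup>2 - b > 0" "a \<le> b" "r\<^sup>2 \<le> 1"
  shows "(1 - a) / (r\<^sup>2 - a) \<le> (1 - b) / (r\<^sup>2 - b)"
proof -
  have "(1 - a) * (r\<^sup>2 - b) \<le> (1 - b) * (r\<^sup>2 - a)"
  proof -
    have "(1 - b) * (r\<^sup>2 - a) - (1 - a) * (r\<^sup>2 - b) = (b - a) * (1 - r\<^sup>2)" by (simp add: algebra_simps)
    also have "\<dots> \<ge> 0" using assms by simp
    finally show ?thesis by simp
  qed
  thus ?thesis using assms by (simp add: divide_simps)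
qed

lemma rho_cmp:
  fixes r y z :: real and n :: nat
  assumes "n \<ge> 1" "r > 0" "0 \<le> y" "y \<le> z"
  shows "r / ((r + 1) * (\<Sum>m<n. z ^ m)) \<le> r / ((r + 1) * (\<Sum>m<n. y ^ m))"
proof -
  have Sy: "(\<Sum>m<n. y ^ m) > 0"
  proof -
    have "(\<Sum>m<n. y ^ m) \<ge> (\<Sum>m\<in>{0}. y ^ m)"
      by (rule sum_mono2) (use assms in auto)
    thus ?thesis by simp
  qed
  have "(\<Sum>m<n. y ^ m) \<le> (\<Sum>m<n. z ^ m)" by (intro sum_mono power_mono) (use assms in auto)
  thus ?thesis using Sy assms
    by (intro divide_left_mono mult_left_mono mult_pos_pos) auto
qed


theorem mainTheorem4:
  fixes V :: "'v set" and E :: "'v \<Rightarrow> 'v \<Rightarrow> bool" and green :: "'v \<Rightarrow> bool"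
  defines "\<rho> \<equiv> (\<lambda>r \<sigma>. mean_fixation_A V E green (r + \<sigma>) (r - \<sigma>) (1 + \<sigma>) (1 - \<sigma>))"
  assumes "simple_graph V E" and "connected_graph V E" and "regular_graph V E"
    and "proper_two_coloring E green"
    and "card {v\<in>V. green v} = card V div 2" and "card {v\<in>V. \<not> green v} = card V div 2"
  shows "(\<forall>r \<sigma>. r > 0 \<longrightarrow> r \<noteq> 1 \<longrightarrow> 0 \<le> \<sigma> \<longrightarrow> \<sigma> < min 1 r \<longrightarrow>
            \<rho> r \<sigma> = r * (r - 1) /
              ((r\<^sup>2 - \<sigma>\<^sup>2) * (1 - ((1 - \<sigma>\<^sup>2) / (r\<^sup>2 - \<sigma>\<^sup>2)) ^ (card V div 2))))
       \<and> (\<forall>r. r > 1 \<longrightarrow> mono_on {0..<min 1 r} (\<rho> r))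
       \<and> (\<forall>r. 0 < r \<longrightarrow> r < 1 \<longrightarrow> antimono_on {0..<min 1 r} (\<rho> r))
       \<and> (\<forall>\<sigma>. 0 \<le> \<sigma> \<longrightarrow> \<sigma> < 1 \<longrightarrow> \<rho> 1 \<sigma> = 1 / real (card V))"
proof -
  note sg = assms(2) and conn = assms(3) and reg = assms(4) and col = assms(5)
  define n where "n = card V div 2"
  have finV: "finite V" using sg by (simp add: simple_graph_def)
  have Vne: "V \<noteq> {}" using conn by (simp add: connected_graph_def)
  have cg: "card {v\<in>V. green v} = n" and cr: "card {v\<in>V. \<not> green v} = n"
    using assms(6,7) by (simp_all add: n_def)
  have "card V = card ({v\<in>V. green v} \<union> {v\<in>V. \<not> green v})" by (rule arg_cong[where f = card]) auto
  also have "\<dots> = n + n" using finV cg cr by (subst card_Un_disjoint) auto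
  finally have cV: "card V = 2 * n" by simp
  have n1: "n \<ge> 1" using cV finV Vne by (cases n) auto
  obtain k where degk: "\<And>v. v \<in> V \<Longrightarrow> deg V E v = k" using reg by (auto simp: regular_graph_def)
  obtain v where v: "v \<in> V" using Vne by auto
  have "\<exists>u\<in>V. u \<noteq> v"
  proof (rule ccontr)
    assume "\<not> ?thesis"
    hence "V \<subseteq> {v}" by auto
    hence "card V \<le> 1" using card_mono[of "{v}" V] by simp
    thus False using cV n1 by simp
  qed
  then obtain u where u: "u \<in> V" "u \<noteq> v" by auto
  have "E\<^sup>*\<^sup>* v u" using conn u v by (auto simp: connected_graph_def)
  then obtain y where "E v y" using u(2) by (metis converse_rtranclpE)
  hence "y \<in> {w\<in>V. E v w}" using sg by (auto simp: simple_graph_def)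
  hence "card {w\<in>V. E v w} > 0" using finV by (auto simp: card_gt_0_iff)
  hence kpos: "k > 0" using degk[OF v] by (simp add: deg_def)
  have F: "\<rho> r \<sigma> = r * (r - 1) / ((r\<^sup>2 - \<sigma>\<^sup>2) * (1 - ((1 - \<sigma>\<^sup>2) / (r\<^sup>2 - \<sigma>\<^sup>2)) ^ n))"
    if "r > 0" "r \<noteq> 1" "0 \<le> \<sigma>" "\<sigma> < min 1 r" for r \<sigma>
    unfolding \<rho>_def by (rule rho_formula[OF sg conn degk kpos col cg cr cV n1 that])
  have F2: "\<rho> r \<sigma> = r / ((r + 1) * (\<Sum>m<n. ((1 - \<sigma>\<^sup>2) / (r\<^sup>2 - \<sigma>\<^sup>2)) ^ m))"
    if "r > 0" "r \<noteq> 1" "0 \<le> \<sigma>" "\<sigma> < min 1 r" for r \<sigma>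
    using F[OF that] rho_alt[OF n1 that] by simp
  have pos: "r\<^sup>2 - \<sigma>\<^sup>2 > 0" "1 - \<sigma>\<^sup>2 > 0" if "r > 0" "0 \<le> \<sigma>" "\<sigma> < min 1 r" for r \<sigma> :: real
  proof -
    have "\<sigma> * \<sigma> < r * r" using that by (intro mult_strict_mono) auto
    thus "r\<^sup>2 - \<sigma>\<^sup>2 > 0" by (simp add: power2_eq_square)
    have "\<sigma> * \<sigma> < 1 * 1" using that by (intro mult_strict_mono) auto
    thus "1 - \<sigma>\<^sup>2 > 0" by (simp add: power2_eq_square)
  qed
  have sq: "\<sigma>\<^sup>2 \<le> \<tau>\<^sup>2" if "0 \<le> \<sigma>" "\<sigma> \<le> \<tau>" for \<sigma> \<tau> :: real
    using that by (simp add: power_mono)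
  have M1: "mono_on {0..<min 1 r} (\<rho> r)" if r: "r > 1" for r
  proof (rule mono_onI)
    fix a b assume ab: "a \<in> {0..<min 1 r}" "b \<in> {0..<min 1 r}" "a \<le> b"
    have r1: "r\<^sup>2 \<ge> 1" using r by (simp add: one_le_power)
    have "(1 - b\<^sup>2) / (r\<^sup>2 - b\<^sup>2) \<le> (1 - a\<^sup>2) / (r\<^sup>2 - a\<^sup>2)"
      by (rule x_le) (use pos[of r a] pos[of r b] ab r r1 sq[of a b] in auto)
    moreover have "0 \<le> (1 - b\<^sup>2) / (r\<^sup>2 - b\<^sup>2)" using pos[of r b] ab r by auto
    moreover have "\<rho> r a = r / ((r + 1) * (\<Sum>m<n. ((1 - a\<^sup>2) / (r\<^sup>2 - a\<^sup>2)) ^ m))"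
      "\<rho> r b = r / ((r + 1) * (\<Sum>m<n. ((1 - b\<^sup>2) / (r\<^sup>2 - b\<^sup>2)) ^ m))"
      using ab r by (auto intro!: F2)
    ultimately show "\<rho> r a \<le> \<rho> r b" using r by (simp add: rho_cmp[OF n1])
  qed
  have M2: "antimono_on {0..<min 1 r} (\<rho> r)" if r: "0 < r" "r < 1" for r
  proof (rule monotone_onI)
    fix a b assume ab: "a \<in> {0..<min 1 r}" "b \<in> {0..<min 1 r}" "a \<le> b"
    have r1: "r\<^sup>2 \<le> 1" using r by (simp add: power_le_one)
    have "(1 - a\<^sup>2) / (r\<^sup>2 - a\<^sup>2) \<le> (1 - b\<^sup>2) / (r\<^sup>2 - b\<^sup>2)"
      by (rule x_ge) (use pos[of r a] pos[of r b] ab r r1 sq[of a b] in auto)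
    moreover have "0 \<le> (1 - a\<^sup>2) / (r\<^sup>2 - a\<^sup>2)" using pos[of r a] ab r by auto
    moreover have "\<rho> r a = r / ((r + 1) * (\<Sum>m<n. ((1 - a\<^sup>2) / (r\<^sup>2 - a\<^sup>2)) ^ m))"
      "\<rho> r b = r / ((r + 1) * (\<Sum>m<n. ((1 - b\<^sup>2) / (r\<^sup>2 - b\<^sup>2)) ^ m))"
      using ab r by (auto intro!: F2)
    ultimately show "\<rho> r b \<le> \<rho> r a" using r by (simp add: rho_cmp[OF n1])
  qed
  have R1: "\<rho> 1 \<sigma> = 1 / real (card V)" if "0 \<le> \<sigma>" "\<sigma> < 1" for \<sigma>
    unfolding \<rho>_def using rho_one[OF sg conn degk kpos col cg cr cV n1 that] by simp
  show ?thesis using F M1 M2 R1 unfolding n_def by blast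
qed

end
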